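(* A bag generation process $P(s\mid y,x)$ is reconstructible if and only if, for every $x\in\mathcal{X}$, the vectors $\mathbf{p}_{1,x},\mathbf{p}_{2,x},\dots,\mathbf{p}_{|\mathcal{Y}|,x}\in\mathbb{R}^{|\mathcal{S}|}$ are linearly independent.
   Context: Let $\mathcal{X}$ be an instance space, $\mathcal{Y}=\{1,\dots,c\}$ a finite label set, and $\mathcal{S}=2^{\mathcal{Y}}=\{s_1,\dots,s_{|\mathcal{S}|}\}$ the set of bags of labels. A bag generation process is a family of conditional probability distributions $P(\cdot\mid y,x)$ on $\mathcal{S}$, one for each $y\in\mathcal{Y}$, $x\in\mathcal{X}$. For $i\in\mathcal{Y}$ and $x\in\mathcal{X}$ let $\mathbf{p}_{i,x}=(P(s_1\mid i,x),P(s_2\mid i,x),\dots,P(s_{|\mathcal{S}|}\mid i,x))^\top\in\mathbb{R}^{|\mathcal{S}|}$. Let $\Delta(\mathcal{Y})$ denote the set of probability distributions on $\mathcal{Y}$. The bag generation process is called reconstructible if for every $x\in\mathcal{X}$ and all $Q_1,Q_2\in\Delta(\mathcal{Y})$, the equality $\sum_{y\in\mathcal{Y}}P(s\mid y,x)Q_1(y)=\sum_{y\in\mathcal{Y}}P(s\mid y,x)Q_2(y)$ for all $s\in\mathcal{S}$ implies $\arg\max_{y\in\mathcal{Y}}Q_1(y)=\arg\max_{y\in\mathcal{Y}}Q_2(y)$ (equality of sets). *)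

theory Defs
  imports Main "HOL-Analysis.Analysis"
begin

text \<open>Labels: a finite type 'y (so Y = UNIV, |Y| = CARD('y)); bags: 'y set (S = 2^Y = UNIV).
  Instances: an arbitrary type 'x.  P y x s stands for P(s | y, x).\<close>

definition is_distribution :: "('a::finite \<Rightarrow> real) \<Rightarrow> bool" where
  "is_distribution Q \<longleftrightarrow> (\<forall>a. 0 \<le> Q a) \<and> (\<Sum>a\<in>UNIV. Q a) = 1"

definition bag_generation_process :: "('y::finite \<Rightarrow> 'x \<Rightarrow> 'y set \<Rightarrow> real) \<Rightarrow> bool" where
  "bag_generation_process P \<longleftrightarrow> (\<forall>y x. is_distribution (\<lambda>s. P y x s))"

definition argmax_set :: "('y \<Rightarrow> real) \<Rightarrow> 'y set" where
  "argmax_set Q = {y. \<forall>y'. Q y' \<le> Q y}"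

definition reconstructible :: "('y::finite \<Rightarrow> 'x \<Rightarrow> 'y set \<Rightarrow> real) \<Rightarrow> bool" where
  "reconstructible P \<longleftrightarrow>
     (\<forall>x Q1 Q2. is_distribution Q1 \<longrightarrow> is_distribution Q2 \<longrightarrow>
        (\<forall>s. (\<Sum>y\<in>UNIV. P y x s * Q1 y) = (\<Sum>y\<in>UNIV. P y x s * Q2 y)) \<longrightarrow>
        argmax_set Q1 = argmax_set Q2)"

definition pvec :: "('y::finite \<Rightarrow> 'x \<Rightarrow> 'y set \<Rightarrow> real) \<Rightarrow> 'y \<Rightarrow> 'x \<Rightarrow> real ^ ('y set)" where
  "pvec P i x = (\<chi> s. P i x s)"

text \<open>Linear independence of a finite family of vectors (repetitions count as dependence).\<close>
definition lin_indep_family :: "('i::finite \<Rightarrow> 'v::real_vector) \<Rightarrow> bool" where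
  "lin_indep_family v \<longleftrightarrow> (\<forall>a. (\<Sum>i\<in>UNIV. a i *\<^sub>R v i) = 0 \<longrightarrow> (\<forall>i. a i = 0))"

end

theory Submission
  imports Defs
begin

lemma comp_eq:
  fixes P :: "'y::finite \<Rightarrow> 'x \<Rightarrow> 'y set \<Rightarrow> real"
  shows "(\<Sum>i\<in>UNIV. a i *\<^sub>R pvec P i x) $ s = (\<Sum>y\<in>UNIV. P y x s * a y)"
  by (simp add: pvec_def sum_component mult.commute)

lemma dir1:
  fixes P :: "'y::finite \<Rightarrow> 'x \<Rightarrow> 'y set \<Rightarrow> real"
  assumes "\<forall>x. lin_indep_family (\<lambda>i. pvec P i x)"
  shows "reconstructible P"
  unfolding reconstructible_def
proof (intro allI impI)
  fix x and Q1 Q2 :: "'y \<Rightarrow> real"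
  assume h: "\<forall>s. (\<Sum>y\<in>UNIV. P y x s * Q1 y) = (\<Sum>y\<in>UNIV. P y x s * Q2 y)"
  have eq0: "(\<Sum>i\<in>UNIV. (Q1 i - Q2 i) *\<^sub>R pvec P i x) = 0"
  proof (subst vec_eq_iff, intro allI)
    fix s
    have "(\<Sum>i\<in>UNIV. (Q1 i - Q2 i) *\<^sub>R pvec P i x) $ s
        = (\<Sum>y\<in>UNIV. P y x s * Q1 y) - (\<Sum>y\<in>UNIV. P y x s * Q2 y)"
      unfolding comp_eq by (simp add: right_diff_distrib sum_subtractf)
    then show "(\<Sum>i\<in>UNIV. (Q1 i - Q2 i) *\<^sub>R pvec P i x) $ s = 0 $ s" using h by simp
  qed
  have li: "lin_indep_family (\<lambda>i. pvec P i x)" using assms by blast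
  have "\<forall>i. Q1 i - Q2 i = 0"
    using li[unfolded lin_indep_family_def, rule_format, OF eq0] by blast
  then have "Q1 = Q2" by auto
  then show "argmax_set Q1 = argmax_set Q2" by simp
qed

lemma dir2:
  fixes P :: "'y::finite \<Rightarrow> 'x \<Rightarrow> 'y set \<Rightarrow> real"
  assumes bg: "bag_generation_process P" and r: "reconstructible P"
  shows "lin_indep_family (\<lambda>i. pvec P i x)"
  unfolding lin_indep_family_def
proof (intro allI impI, rule ccontr)
  fix a :: "'y \<Rightarrow> real" and i
  assume a0: "(\<Sum>i\<in>UNIV. a i *\<^sub>R pvec P i x) = 0" and ai: "a i \<noteq> 0"
  have comp0: "(\<Sum>y\<in>UNIV. P y x s * a y) = 0" for s
    using arg_cong[OF a0, of "\<lambda>v. v $ s"] unfolding comp_eq by simp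
  have psum: "(\<Sum>s\<in>UNIV. P y x s) = 1" for y
    using bg unfolding bag_generation_process_def is_distribution_def by blast
  have "(\<Sum>y\<in>UNIV. a y) = (\<Sum>y\<in>UNIV. a y * (\<Sum>s\<in>UNIV. P y x s))" using psum by simp
  also have "\<dots> = (\<Sum>y\<in>UNIV. \<Sum>s\<in>UNIV. P y x s * a y)"
    by (simp add: sum_distrib_left mult.commute)
  also have "\<dots> = (\<Sum>s\<in>UNIV. \<Sum>y\<in>UNIV. P y x s * a y)"
    by (rule sum.swap)
  also have "\<dots> = 0" using comp0 by simp
  finally have suma: "(\<Sum>y\<in>UNIV. a y) = 0" .
  obtain j where j: "a j < 0"
  proof (rule ccontr)
    assume "\<not> thesis"
    with that have "\<forall>y. a y \<ge> 0" by (meson not_le)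
    with suma have "\<forall>y. a y = 0" by (simp add: sum_nonneg_eq_0_iff)
    with ai show False by simp
  qed
  obtain k where k: "a k > 0"
  proof (rule ccontr)
    assume "\<not> thesis"
    with that have "\<forall>y. a y \<le> 0" by (meson not_le)
    with suma have "\<forall>y. - a y = 0"
      using sum_nonneg_eq_0_iff[of UNIV "\<lambda>y. - a y"] by (simp add: sum_negf)
    with ai show False by simp
  qed
  define c where "c = real CARD('y)"
  have cpos: "c > 0" unfolding c_def by simp
  define M where "M = (\<Sum>y\<in>UNIV. \<bar>a y\<bar>)"
  have aleM: "\<bar>a y\<bar> \<le> M" for y
    unfolding M_def by (rule member_le_sum) auto
  have Mpos: "M > 0" using aleM[of i] ai by linarith
  define e where "e = 1 / (c * M)"
  have epos: "e > 0" unfolding e_def using cpos Mpos by simp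
  define Q2 :: "'y \<Rightarrow> real" where "Q2 = (\<lambda>y. 1 / c)"
  define Q1 :: "'y \<Rightarrow> real" where "Q1 = (\<lambda>y. 1 / c + e * a y)"
  have d2: "is_distribution Q2" unfolding is_distribution_def Q2_def c_def by simp
  have d1: "is_distribution Q1" unfolding is_distribution_def
  proof
    show "\<forall>y. 0 \<le> Q1 y"
    proof
      fix y
      have "e * \<bar>a y\<bar> \<le> e * M" using aleM epos by (simp add: mult_left_mono)
      also have "e * M = 1 / c" unfolding e_def using Mpos by simp
      finally have "- (1/c) \<le> e * a y" using epos by (smt (verit) abs_mult abs_of_pos abs_le_iff)
      then show "0 \<le> Q1 y" unfolding Q1_def by simp
    qed
    have "(\<Sum>y\<in>UNIV. Q1 y) = c * (1 / c) + e * (\<Sum>y\<in>UNIV. a y)"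
      unfolding Q1_def c_def by (simp add: sum.distrib sum_distrib_left)
    then show "(\<Sum>y\<in>UNIV. Q1 y) = 1" using suma cpos by simp
  qed
  have eqs: "\<forall>s. (\<Sum>y\<in>UNIV. P y x s * Q1 y) = (\<Sum>y\<in>UNIV. P y x s * Q2 y)"
  proof
    fix s
    have "(\<Sum>y\<in>UNIV. P y x s * Q1 y) = (\<Sum>y\<in>UNIV. P y x s * Q2 y) + e * (\<Sum>y\<in>UNIV. P y x s * a y)"
      unfolding Q1_def Q2_def by (simp add: algebra_simps sum.distrib sum_distrib_left)
    then show "(\<Sum>y\<in>UNIV. P y x s * Q1 y) = (\<Sum>y\<in>UNIV. P y x s * Q2 y)" using comp0 by simp
  qed
  have "argmax_set Q1 = argmax_set Q2" using r d1 d2 eqs unfolding reconstructible_def by blast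
  moreover have "j \<in> argmax_set Q2" unfolding argmax_set_def Q2_def by simp
  moreover have "j \<notin> argmax_set Q1"
  proof
    assume "j \<in> argmax_set Q1"
    then have "Q1 k \<le> Q1 j" unfolding argmax_set_def by blast
    moreover have "e * a j < e * a k" using j k epos by simp
    ultimately show False unfolding Q1_def by simp
  qed
  ultimately show False by simp
qed

theorem theorem1:
  fixes P :: "'y::finite \<Rightarrow> 'x \<Rightarrow> 'y set \<Rightarrow> real"
  assumes "bag_generation_process P"
  shows "reconstructible P \<longleftrightarrow> (\<forall>x. lin_indep_family (\<lambda>i. pvec P i x))"
proof
  assume "reconstructible P"
  then show "\<forall>x. lin_indep_family (\<lambda>i. pvec P i x)" using dir2[OF assms] by blast
next
  assume "\<forall>x. lin_indep_family (\<lambda>i. pvec P i x)"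
  then show "reconstructible P" by (rule dir1)
qed

end
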